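(* Let $G=(V,E,w)$ be a strongly connected directed weighted graph, let $S_1\subseteq S_2\subseteq V$, and let $0\le\delta_1\le\delta_2$. Then $\operatorname{fp}(G^{S_1},\delta_1)\le\operatorname{fp}(G^{S_2},\delta_2)$.
   Context: Positional Voter model. A graph $G=(V,E,w)$ has node set $V$ with $|V|=n$, edge set $E\subseteq V\times V$ and weights $w\colon E\to\mathbb{R}_{>0}$; $\operatorname{in}(u)=\{v\in V:(v,u)\in E\}$. A configuration is a set $X\subseteq V$ (the nodes carrying the novel trait $A$). Given a biased set $S\subseteq V$ and bias $\delta\ge 0$, define $f^S_X(v\mid u)=1+\delta$ if $v\in X$ and $u\in S$, and $1$ otherwise. The process $(\mathcal{X}_t)_{t\ge0}$: given $\mathcal{X}_t=X$, a node $u$ is chosen uniformly at random from $V$, then $v\in\operatorname{in}(u)$ is chosen with probability $\frac{f^S_X(v\mid u)\,w(v,u)}{\sum_{x\in\operatorname{in}(u)} f^S_X(x\mid u)\,w(x,u)}$, and $\mathcal{X}_{t+1}=X\cup\{u\}$ if $v\in X$, $\mathcal{X}_{t+1}=X\setminus\{u\}$ otherwise. Define $\operatorname{fp}(G^S,\delta,X)=\mathbb{P}[\exists t\ge0:\mathcal{X}_t=V\mid\mathcal{X}_0=X]$ and $\operatorname{fp}(G^S,\delta)=\frac1n\sum_{u\in V}\operatorname{fp}(G^S,\delta,\{u\})$. *)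

theory Defs
  imports Complex_Main
begin

definition weighted_graph :: "'a set \<Rightarrow> ('a \<times> 'a) set \<Rightarrow> ('a \<times> 'a \<Rightarrow> real) \<Rightarrow> bool" where
  "weighted_graph V E w \<longleftrightarrow> finite V \<and> E \<subseteq> V \<times> V \<and> (\<forall>e\<in>E. w e > 0)"

definition strongly_connected :: "'a set \<Rightarrow> ('a \<times> 'a) set \<Rightarrow> bool" where
  "strongly_connected V E \<longleftrightarrow> (\<forall>u\<in>V. \<forall>v\<in>V. (u, v) \<in> E\<^sup>*)"

definition in_nbrs :: "('a \<times> 'a) set \<Rightarrow> 'a \<Rightarrow> 'a set" where
  "in_nbrs E u = {v. (v, u) \<in> E}"

definition fbias :: "'a set \<Rightarrow> real \<Rightarrow> 'a set \<Rightarrow> 'a \<Rightarrow> 'a \<Rightarrow> real" where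
  "fbias S \<delta> X v u = (if v \<in> X \<and> u \<in> S then 1 + \<delta> else 1)"

text \<open>Probability that node v is chosen as the one u copies from (configuration X).\<close>
definition copy_prob :: "('a \<times> 'a) set \<Rightarrow> ('a \<times> 'a \<Rightarrow> real) \<Rightarrow> 'a set \<Rightarrow> real \<Rightarrow> 'a set \<Rightarrow> 'a \<Rightarrow> 'a \<Rightarrow> real" where
  "copy_prob E w S \<delta> X u v =
     fbias S \<delta> X v u * w (v, u) / (\<Sum>x\<in>in_nbrs E u. fbias S \<delta> X x u * w (x, u))"

text \<open>hit_prob V E w S \<delta> T X = P[exists t \<le> T. X_t = V | X_0 = X], by one-step analysis.
  (If in(u) is empty -- only possible for |V| = 1 in a strongly connected graph --
  the chosen node keeps its trait.)\<close>
fun hit_prob :: "'a set \<Rightarrow> ('a \<times> 'a) set \<Rightarrow> ('a \<times> 'a \<Rightarrow> real) \<Rightarrow> 'a set \<Rightarrow> real \<Rightarrow> nat \<Rightarrow> 'a set \<Rightarrow> real" where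
  "hit_prob V E w S \<delta> 0 X = (if X = V then 1 else 0)"
| "hit_prob V E w S \<delta> (Suc T) X =
     (if X = V then 1 else
      (1 / real (card V)) * (\<Sum>u\<in>V.
         (if in_nbrs E u = {} then hit_prob V E w S \<delta> T X
          else (\<Sum>v\<in>in_nbrs E u.
                  copy_prob E w S \<delta> X u v *
                  (if v \<in> X then hit_prob V E w S \<delta> T (insert u X)
                   else hit_prob V E w S \<delta> T (X - {u}))))))"

text \<open>fp(G^S, \<delta>, X) = P[exists t. X_t = V] = sup over T of P[exists t \<le> T. X_t = V]
  (continuity of probability along the increasing events).\<close>
definition fp_from :: "'a set \<Rightarrow> ('a \<times> 'a) set \<Rightarrow> ('a \<times> 'a \<Rightarrow> real) \<Rightarrow> 'a set \<Rightarrow> real \<Rightarrow> 'a set \<Rightarrow> real" where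
  "fp_from V E w S \<delta> X = (SUP T. hit_prob V E w S \<delta> T X)"

definition fp :: "'a set \<Rightarrow> ('a \<times> 'a) set \<Rightarrow> ('a \<times> 'a \<Rightarrow> real) \<Rightarrow> 'a set \<Rightarrow> real \<Rightarrow> real" where
  "fp V E w S \<delta> = (1 / real (card V)) * (\<Sum>u\<in>V. fp_from V E w S \<delta> {u})"

end

theory Submission imports Defs begin
lemma frac_mono: fixes a a' b b' \<beta> \<beta>' :: real
  assumes "0 \<le> a" "a \<le> a'" "0 \<le> b'" "b' \<le> b" "0 < \<beta>" "\<beta> \<le> \<beta>'" "0 < \<beta>*a + b" "0 < \<beta>'*a'+b'"
  shows "\<beta>*a/(\<beta>*a+b) \<le> \<beta>'*a'/(\<beta>'*a'+b')"
proof -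
  have "\<beta>*a \<le> \<beta>'*a'" using assms by (intro mult_mono) auto
  hence "\<beta>*a*b' \<le> \<beta>'*a'*b" using assms by (intro mult_mono) auto
  thus ?thesis using assms by (simp add: divide_simps algebra_simps)
qed
lemma comb: fixes p1 p2 a1 a2 b1 b2 :: real
  assumes "p1 \<le> p2" "0 \<le> p2" "p2 \<le> 1" "b1 \<le> a1" "a1 \<le> a2" "b1 \<le> b2"
  shows "p1*a1 + (1-p1)*b1 \<le> p2*a2 + (1-p2)*b2"
proof -
  have "p1*a1 + (1-p1)*b1 = b1 + p1*(a1-b1)" by (simp add: algebra_simps)
  also have "\<dots> \<le> b1 + p2*(a1-b1)" using assms by (intro add_left_mono mult_right_mono) auto
  also have "\<dots> = (1-p2)*b1 + p2*a1" by (simp add: algebra_simps)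
  also have "\<dots> \<le> (1-p2)*b2 + p2*a2" using assms by (intro add_mono mult_left_mono) auto
  finally show ?thesis by simp
qed


lemma in_sub: "E \<subseteq> V \<times> V \<Longrightarrow> in_nbrs E u \<subseteq> V"
  by (auto simp: in_nbrs_def)

lemma fbias_pos: "0 \<le> \<delta> \<Longrightarrow> 0 < fbias S \<delta> X v u"
  by (simp add: fbias_def)

lemma denom_pos:
  assumes "finite V" "E \<subseteq> V \<times> V" "\<forall>e\<in>E. w e > 0" "0 \<le> \<delta>" "in_nbrs E u \<noteq> {}"
  shows "0 < (\<Sum>x\<in>in_nbrs E u. fbias S \<delta> X x u * w (x, u))"
proof (rule sum_pos)
  show "finite (in_nbrs E u)" using assms in_sub finite_subset by metis
  show "in_nbrs E u \<noteq> {}" by fact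
  fix x assume "x \<in> in_nbrs E u"
  hence "w (x,u) > 0" using assms by (auto simp: in_nbrs_def)
  thus "0 < fbias S \<delta> X x u * w (x, u)" using fbias_pos[OF assms(4), of S X x u] by (simp add: mult_pos_pos)
qed

lemma cp_nonneg:
  assumes "E \<subseteq> V \<times> V" "\<forall>e\<in>E. w e > 0" "0 \<le> \<delta>" "v \<in> in_nbrs E u"
  shows "0 \<le> copy_prob E w S \<delta> X u v"
proof -
  have "w (v,u) > 0" using assms by (auto simp: in_nbrs_def)
  moreover have "0 \<le> (\<Sum>x\<in>in_nbrs E u. fbias S \<delta> X x u * w (x, u))"
    using assms fbias_pos[OF assms(3)] by (intro sum_nonneg) (auto simp: in_nbrs_def intro!: mult_nonneg_nonneg less_imp_le[OF fbias_pos])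
  ultimately show ?thesis using fbias_pos[OF assms(3), of S X v u] unfolding copy_prob_def
    by (intro divide_nonneg_nonneg mult_nonneg_nonneg) auto
qed

lemma cp_sum1:
  assumes "finite V" "E \<subseteq> V \<times> V" "\<forall>e\<in>E. w e > 0" "0 \<le> \<delta>" "in_nbrs E u \<noteq> {}"
  shows "(\<Sum>v\<in>in_nbrs E u. copy_prob E w S \<delta> X u v) = 1"
  using denom_pos[OF assms, of S X]
  unfolding copy_prob_def sum_divide_distrib[symmetric] by simp

lemma p_formula:
  assumes "finite V" "E \<subseteq> V \<times> V" "\<forall>e\<in>E. w e > 0" "0 \<le> \<delta>" "in_nbrs E u \<noteq> {}"
  shows "(\<Sum>v\<in>in_nbrs E u \<inter> X. copy_prob E w S \<delta> X u v) =
    (if u \<in> S then 1 + \<delta> else 1) * (\<Sum>v\<in>in_nbrs E u \<inter> X. w (v,u)) /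
    ((if u \<in> S then 1 + \<delta> else 1) * (\<Sum>v\<in>in_nbrs E u \<inter> X. w (v,u)) + (\<Sum>v\<in>in_nbrs E u - X. w (v,u)))"
proof -
  let ?N = "in_nbrs E u"
  let ?f = "\<lambda>x. fbias S \<delta> X x u * w (x, u)"
  let ?b = "if u \<in> S then 1 + \<delta> else 1"
  have fin: "finite ?N" using assms in_sub finite_subset by metis
  have 1: "(\<Sum>x\<in>?N \<inter> X. ?f x) = ?b * (\<Sum>v\<in>?N \<inter> X. w (v,u))"
    by (simp add: sum_distrib_left fbias_def)
  have 2: "(\<Sum>x\<in>?N - X. ?f x) = (\<Sum>v\<in>?N - X. w (v,u))"
    by (simp add: fbias_def)
  have D: "(\<Sum>x\<in>?N. ?f x) = (\<Sum>x\<in>?N \<inter> X. ?f x) + (\<Sum>x\<in>?N - X. ?f x)"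
    using fin by (rule sum.Int_Diff)
  have "(\<Sum>v\<in>?N \<inter> X. copy_prob E w S \<delta> X u v) = (\<Sum>x\<in>?N \<inter> X. ?f x) / (\<Sum>x\<in>?N. ?f x)"
    unfolding copy_prob_def sum_divide_distrib[symmetric] by simp
  thus ?thesis using 1 2 D by simp
qed

lemma sum_split:
  fixes c :: "'a \<Rightarrow> real"
  assumes "finite N" "(\<Sum>v\<in>N. c v) = 1"
  shows "(\<Sum>v\<in>N. c v * (if v \<in> X then A else B)) = (\<Sum>v\<in>N\<inter>X. c v) * A + (1 - (\<Sum>v\<in>N\<inter>X. c v)) * B"
proof -
  have "(\<Sum>v\<in>N. c v * (if v \<in> X then A else B)) = (\<Sum>v\<in>N\<inter>X. c v * (if v \<in> X then A else B)) + (\<Sum>v\<in>N-X. c v * (if v \<in> X then A else B))"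
    using assms(1) by (rule sum.Int_Diff)
  also have "\<dots> = (\<Sum>v\<in>N\<inter>X. c v) * A + (\<Sum>v\<in>N-X. c v) * B"
    by (simp add: sum_distrib_right)
  also have "(\<Sum>v\<in>N-X. c v) = 1 - (\<Sum>v\<in>N\<inter>X. c v)"
    using assms sum.Int_Diff[OF assms(1), of c X] by simp
  finally show ?thesis .
qed

lemma denom_eq:
  assumes "finite V" "E \<subseteq> V \<times> V"
  shows "(\<Sum>x\<in>in_nbrs E u. fbias S \<delta> X x u * w (x, u)) =
    (if u \<in> S then 1 + \<delta> else 1) * (\<Sum>v\<in>in_nbrs E u \<inter> X. w (v,u)) + (\<Sum>v\<in>in_nbrs E u - X. w (v,u))"
proof -
  let ?N = "in_nbrs E u"
  let ?f = "\<lambda>x. fbias S \<delta> X x u * w (x, u)"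
  let ?b = "if u \<in> S then 1 + \<delta> else 1"
  have fin: "finite ?N" using assms in_sub finite_subset by metis
  have 1: "(\<Sum>x\<in>?N \<inter> X. ?f x) = ?b * (\<Sum>v\<in>?N \<inter> X. w (v,u))"
    by (simp add: sum_distrib_left fbias_def)
  have 2: "(\<Sum>x\<in>?N - X. ?f x) = (\<Sum>v\<in>?N - X. w (v,u))"
    by (simp add: fbias_def)
  have D: "(\<Sum>x\<in>?N. ?f x) = (\<Sum>x\<in>?N \<inter> X. ?f x) + (\<Sum>x\<in>?N - X. ?f x)"
    using fin by (rule sum.Int_Diff)
  show ?thesis using 1 2 D by simp
qed

lemma step_form:
  assumes "finite V" "E \<subseteq> V \<times> V" "\<forall>e\<in>E. w e > 0" "0 \<le> \<delta>" "in_nbrs E u \<noteq> {}"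
  shows "(\<Sum>v\<in>in_nbrs E u. copy_prob E w S \<delta> X u v * (if v \<in> X then A else B)) =
     (\<Sum>v\<in>in_nbrs E u \<inter> X. copy_prob E w S \<delta> X u v) * A + (1 - (\<Sum>v\<in>in_nbrs E u \<inter> X. copy_prob E w S \<delta> X u v)) * B"
  by (rule sum_split) (use assms in_sub finite_subset cp_sum1 in metis)+

lemma p_bounds:
  assumes "finite V" "E \<subseteq> V \<times> V" "\<forall>e\<in>E. w e > 0" "0 \<le> \<delta>" "in_nbrs E u \<noteq> {}"
  shows "0 \<le> (\<Sum>v\<in>in_nbrs E u \<inter> X. copy_prob E w S \<delta> X u v)"
    "(\<Sum>v\<in>in_nbrs E u \<inter> X. copy_prob E w S \<delta> X u v) \<le> 1"
proof -
  have fin: "finite (in_nbrs E u)" using assms in_sub finite_subset by metis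
  show "0 \<le> (\<Sum>v\<in>in_nbrs E u \<inter> X. copy_prob E w S \<delta> X u v)"
    using cp_nonneg[OF assms(2,3,4)] by (intro sum_nonneg) auto
  have "(\<Sum>v\<in>in_nbrs E u \<inter> X. copy_prob E w S \<delta> X u v) \<le> (\<Sum>v\<in>in_nbrs E u. copy_prob E w S \<delta> X u v)"
    using cp_nonneg[OF assms(2,3,4)] fin by (intro sum_mono2) auto
  thus "(\<Sum>v\<in>in_nbrs E u \<inter> X. copy_prob E w S \<delta> X u v) \<le> 1"
    using cp_sum1[OF assms] by simp
qed

lemma hit_bounds:
  assumes "finite V" "E \<subseteq> V \<times> V" "\<forall>e\<in>E. w e > 0" "0 \<le> \<delta>"
  shows "0 \<le> hit_prob V E w S \<delta> T X \<and> hit_prob V E w S \<delta> T X \<le> 1"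
proof (induction T arbitrary: X)
  case 0 then show ?case by simp
next
  case (Suc T)
  show ?case
  proof (cases "X = V")
    case True then show ?thesis by simp
  next
    case False
    define g where "g u = (if in_nbrs E u = {} then hit_prob V E w S \<delta> T X
          else (\<Sum>v\<in>in_nbrs E u.
                  copy_prob E w S \<delta> X u v *
                  (if v \<in> X then hit_prob V E w S \<delta> T (insert u X)
                   else hit_prob V E w S \<delta> T (X - {u}))))" for u
    have g: "0 \<le> g u \<and> g u \<le> 1" for u
    proof (cases "in_nbrs E u = {}")
      case True then show ?thesis using Suc.IH by (simp add: g_def)
    next
      case ne: False
      let ?p = "(\<Sum>v\<in>in_nbrs E u \<inter> X. copy_prob E w S \<delta> X u v)"
      have gu: "g u = ?p * hit_prob V E w S \<delta> T (insert u X) + (1 - ?p) * hit_prob V E w S \<delta> T (X - {u})"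
        unfolding g_def using ne step_form[OF assms ne] by simp
      have pb: "0 \<le> ?p" "?p \<le> 1" using p_bounds[OF assms ne] by auto
      have A: "0 \<le> hit_prob V E w S \<delta> T (insert u X)" "hit_prob V E w S \<delta> T (insert u X) \<le> 1"
        using Suc.IH by auto
      have B: "0 \<le> hit_prob V E w S \<delta> T (X - {u})" "hit_prob V E w S \<delta> T (X - {u}) \<le> 1"
        using Suc.IH by auto
      have "?p * hit_prob V E w S \<delta> T (insert u X) \<le> ?p" using pb A mult_left_le by blast
      moreover have "(1 - ?p) * hit_prob V E w S \<delta> T (X - {u}) \<le> 1 - ?p" using pb B by (intro mult_left_le) auto
      ultimately show ?thesis using gu pb A B by (simp add: add_mono)
    qed
    have s0: "0 \<le> sum g V" using g by (simp add: sum_nonneg)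
    have s1: "sum g V \<le> real (card V)" using sum_bounded_above[of V g 1] g by simp
    have "hit_prob V E w S \<delta> (Suc T) X = (1 / real (card V)) * sum g V"
      using False by (simp add: g_def)
    moreover have "(1 / real (card V)) * sum g V \<le> 1"
      using s1 s0 by (cases "card V = 0") (auto simp: divide_simps)
    moreover have "0 \<le> (1 / real (card V)) * sum g V" using s0 by simp
    ultimately show ?thesis by simp
  qed
qed

lemma hit_mono:
  assumes "finite V" "E \<subseteq> V \<times> V" "\<forall>e\<in>E. w e > 0"
  shows "S1 \<subseteq> S2 \<Longrightarrow> 0 \<le> \<delta>1 \<Longrightarrow> \<delta>1 \<le> \<delta>2 \<Longrightarrow> X \<subseteq> Y \<Longrightarrow> Y \<subseteq> V \<Longrightarrow>
    hit_prob V E w S1 \<delta>1 T X \<le> hit_prob V E w S2 \<delta>2 T Y"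
proof (induction T arbitrary: S1 S2 \<delta>1 \<delta>2 X Y)
  case 0 then show ?case by auto
next
  case (Suc T)
  have d2: "0 \<le> \<delta>2" using Suc.prems by simp
  show ?case
  proof (cases "Y = V")
    case True then show ?thesis using hit_bounds[OF assms Suc.prems(2), of S1 "Suc T" X] by simp
  next
    case False
    hence XV: "X \<noteq> V" using Suc.prems by auto
    let ?h1 = "hit_prob V E w S1 \<delta>1 T" and ?h2 = "hit_prob V E w S2 \<delta>2 T"
    define g1 where "g1 u = (if in_nbrs E u = {} then ?h1 X
          else (\<Sum>v\<in>in_nbrs E u. copy_prob E w S1 \<delta>1 X u v *
                  (if v \<in> X then ?h1 (insert u X) else ?h1 (X - {u}))))" for u
    define g2 where "g2 u = (if in_nbrs E u = {} then ?h2 Y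
          else (\<Sum>v\<in>in_nbrs E u. copy_prob E w S2 \<delta>2 Y u v *
                  (if v \<in> Y then ?h2 (insert u Y) else ?h2 (Y - {u}))))" for u
    have g: "g1 u \<le> g2 u" if uV: "u \<in> V" for u
    proof (cases "in_nbrs E u = {}")
      case True then show ?thesis using Suc.IH[OF Suc.prems] by (simp add: g1_def g2_def)
    next
      case ne: False
      let ?N = "in_nbrs E u"
      have fin: "finite ?N" using assms in_sub finite_subset by metis
      let ?p1 = "(\<Sum>v\<in>?N \<inter> X. copy_prob E w S1 \<delta>1 X u v)"
      let ?p2 = "(\<Sum>v\<in>?N \<inter> Y. copy_prob E w S2 \<delta>2 Y u v)"
      have g1u: "g1 u = ?p1 * ?h1 (insert u X) + (1 - ?p1) * ?h1 (X - {u})"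
        unfolding g1_def using ne step_form[OF assms Suc.prems(2) ne] by simp
      have g2u: "g2 u = ?p2 * ?h2 (insert u Y) + (1 - ?p2) * ?h2 (Y - {u})"
        unfolding g2_def using ne step_form[OF assms d2 ne] by simp
      have pb: "0 \<le> ?p2" "?p2 \<le> 1" using p_bounds[OF assms d2 ne] by auto
      have ba: "?h1 (X - {u}) \<le> ?h1 (insert u X)"
        using Suc.IH[of S1 S1 \<delta>1 \<delta>1 "X - {u}" "insert u X"] Suc.prems uV by auto
      have aa: "?h1 (insert u X) \<le> ?h2 (insert u Y)"
        using Suc.IH[of S1 S2 \<delta>1 \<delta>2 "insert u X" "insert u Y"] Suc.prems uV by auto
      have bb: "?h1 (X - {u}) \<le> ?h2 (Y - {u})"
        using Suc.IH[of S1 S2 \<delta>1 \<delta>2 "X - {u}" "Y - {u}"] Suc.prems uV by auto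
      let ?b1 = "if u \<in> S1 then 1 + \<delta>1 else 1" and ?b2 = "if u \<in> S2 then 1 + \<delta>2 else 1"
      let ?aX = "\<Sum>v\<in>?N \<inter> X. w (v,u)" and ?aY = "\<Sum>v\<in>?N \<inter> Y. w (v,u)"
      let ?cX = "\<Sum>v\<in>?N - X. w (v,u)" and ?cY = "\<Sum>v\<in>?N - Y. w (v,u)"
      have wpos: "v \<in> ?N \<Longrightarrow> 0 \<le> w (v,u)" for v using assms(3) by (auto simp: in_nbrs_def less_imp_le)
      have pp: "?p1 \<le> ?p2"
        unfolding p_formula[OF assms Suc.prems(2) ne] p_formula[OF assms d2 ne]
      proof (rule frac_mono)
        show "0 \<le> ?aX" using wpos by (intro sum_nonneg) auto
        show "?aX \<le> ?aY" using wpos fin Suc.prems by (intro sum_mono2) auto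
        show "0 \<le> ?cY" using wpos by (intro sum_nonneg) auto
        show "?cY \<le> ?cX" using wpos fin Suc.prems by (intro sum_mono2) auto
        show "0 < ?b1" using Suc.prems by auto
        show "?b1 \<le> ?b2" using Suc.prems by auto
        show "0 < ?b1 * ?aX + ?cX"
          using denom_pos[OF assms Suc.prems(2) ne, of S1 X] denom_eq[OF assms(1,2), where u=u and S=S1 and \<delta>=\<delta>1 and X=X and w=w] by simp
        show "0 < ?b2 * ?aY + ?cY"
          using denom_pos[OF assms d2 ne, of S2 Y] denom_eq[OF assms(1,2), where u=u and S=S2 and \<delta>=\<delta>2 and X=Y and w=w] by simp
      qed
      show ?thesis unfolding g1u g2u using comb[OF pp pb ba aa bb] .
    qed
    have "hit_prob V E w S1 \<delta>1 (Suc T) X = (1 / real (card V)) * sum g1 V"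
      using XV by (simp add: g1_def)
    also have "\<dots> \<le> (1 / real (card V)) * sum g2 V"
      using g by (intro mult_left_mono sum_mono) auto
    also have "\<dots> = hit_prob V E w S2 \<delta>2 (Suc T) Y"
      using False by (simp add: g2_def)
    finally show ?thesis .
  qed
qed

theorem mainTheorem6:
  fixes V :: "'a set" and E :: "('a \<times> 'a) set" and w :: "'a \<times> 'a \<Rightarrow> real"
    and S1 S2 :: "'a set" and \<delta>1 \<delta>2 :: real
  assumes "weighted_graph V E w"
    and "strongly_connected V E"
    and "S1 \<subseteq> S2" and "S2 \<subseteq> V"
    and "0 \<le> \<delta>1" and "\<delta>1 \<le> \<delta>2"
  shows "fp V E w S1 \<delta>1 \<le> fp V E w S2 \<delta>2"
proof -
  have g: "finite V" "E \<subseteq> V \<times> V" "\<forall>e\<in>E. w e > 0" using assms(1) by (auto simp: weighted_graph_def)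
  have d2: "0 \<le> \<delta>2" using assms by simp
  have fpu: "fp_from V E w S1 \<delta>1 {u} \<le> fp_from V E w S2 \<delta>2 {u}" if "u \<in> V" for u
    unfolding fp_from_def
  proof (rule cSUP_mono)
    show "UNIV \<noteq> {}" by simp
    show "bdd_above (range (\<lambda>T. hit_prob V E w S2 \<delta>2 T {u}))"
      using hit_bounds[OF g d2] by (intro bdd_aboveI[where M=1]) auto
    fix T show "\<exists>T'\<in>UNIV. hit_prob V E w S1 \<delta>1 T {u} \<le> hit_prob V E w S2 \<delta>2 T' {u}"
      using hit_mono[OF g assms(3,5,6), of "{u}" "{u}" T] that by auto
  qed
  show ?thesis unfolding fp_def using fpu by (intro mult_left_mono sum_mono) auto
qed
end
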